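(* Let $m\ge 1$ and let $n_1,\dots,n_m$ be positive integers. Let $w_1,\dots,w_m>0$ be pairwise distinct weights and put $r_k=1/w_k$. Let $x_{k;j}$ ($1\le k\le m$, $1\le j\le n_k$) be independent random variables, each uniformly distributed on $(0,1]$, and define $$Q=\prod_{k=1}^m\Big[\prod_{j=1}^{n_k}x_{k;j}\Big]^{w_k}.$$ For $\tau\in(0,1]$ put $t=-\ln\tau$, and for $x\ge 0$ and an integer $n\ge 0$ let $H(x,n)=e^{-x}\sum_{i=0}^{n}\frac{x^i}{i!}$. Then $$\mathrm{Prob}(Q\le\tau)=\sum_{k=1}^m\sum_{g_k=0}^{n_k-1}\ \sum_{\substack{(g_i)_{i\ne k},\ g_i\ge 0\\ \sum_{i=1}^m g_i=n_k-1}}\left(\prod_{j=1,\,j\ne k}^m\frac{(n_j-1+g_j)!}{(n_j-1)!\,g_j!}\,\frac{(-r_k)^{g_j}\,r_j^{n_j}}{(r_j-r_k)^{n_j+g_j}}\right)H(r_k t,\,g_k),$$ where the inner sum runs over all tuples of nonnegative integers $(g_i)_{i\ne k}$ such that $g_k+\sum_{i\ne k}g_i=n_k-1$.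
   Context: This is the combined $P$-value when $L=\sum_k n_k$ independent $P$-values are split into $m$ groups, the $P$-values of group $k$ all receiving weight $w_k$; the observed statistic is $\tau=\prod_k[\prod_j p_{k;j}]^{w_k}$. *)

theory Defs
  imports "HOL-Probability.Probability"
begin

definition H :: "real \<Rightarrow> nat \<Rightarrow> real" where
  "H x n = exp (- x) * (\<Sum>i\<le>n. x ^ i / fact i)"

definition Qstat :: "nat \<Rightarrow> (nat \<Rightarrow> nat) \<Rightarrow> (nat \<Rightarrow> real) \<Rightarrow> (nat \<times> nat \<Rightarrow> real) \<Rightarrow> real" where
  "Qstat m n w x = (\<Prod>k\<in>{1..m}. (\<Prod>j\<in>{1..n k}. x (k, j)) powr w k)"

end

theory Submission
  imports Defs
begin

definition coef :: "real \<Rightarrow> real \<Rightarrow> nat \<Rightarrow> nat \<Rightarrow> real" where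
  "coef rk rj nj gj = real ((nj + gj - 1) choose gj) * ((- rk) ^ gj * rj ^ nj / (rj - rk) ^ (nj + gj))"

definition tup :: "nat set \<Rightarrow> nat \<Rightarrow> (nat \<Rightarrow> nat) set" where
  "tup A d = {g. (\<forall>i. i \<notin> A \<longrightarrow> g i = 0) \<and> (\<Sum>i\<in>A. g i) = d}"

definition tsum :: "nat set \<Rightarrow> nat \<Rightarrow> (nat \<Rightarrow> nat \<Rightarrow> real) \<Rightarrow> real" where
  "tsum A d f = (\<Sum>g\<in>tup A d. \<Prod>j\<in>A. f j (g j))"

lemma finite_tup: assumes "finite A" shows "finite (tup A d)"
proof -
  have "tup A d \<subseteq> {g. \<forall>x. (x \<in> A \<longrightarrow> g x \<in> {0..d}) \<and> (x \<notin> A \<longrightarrow> g x = 0)}"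
    unfolding tup_def using assms by (auto intro: member_le_sum[where f="\<lambda>x. x", simplified] simp: member_le_sum)
  then show ?thesis by (rule finite_subset) (intro finite_set_of_finite_funs assms, simp)
qed

lemma tsum_decomp:
  assumes A: "finite A" and p: "p \<in> A"
  shows "tsum A d f = (\<Sum>i\<le>d. f p i * tsum (A - {p}) (d - i) f)"
proof -
  let ?S = "SIGMA i:{..d}. tup (A - {p}) (d - i)"
  let ?h = "\<lambda>(i, g). g(p := i)"
  have img0: "\<And>i g. i \<in> {..d} \<Longrightarrow> g \<in> tup (A - {p}) (d - i) \<Longrightarrow> g(p := i) \<in> tup A d"
  proof -
    fix i g assume i: "i \<in> {..d}" and g: "g \<in> tup (A - {p}) (d - i)"
    have "(\<Sum>j\<in>A. (g(p := i)) j) = i + (\<Sum>j\<in>A - {p}. (g(p := i)) j)"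
      using A p by (simp add: sum.remove)
    also have "(\<Sum>j\<in>A - {p}. (g(p := i)) j) = (\<Sum>j\<in>A - {p}. g j)"
      by (rule sum.cong) auto
    finally show "g(p := i) \<in> tup A d" using g i p by (auto simp: tup_def)
  qed
  have img1: "?h ` ?S \<subseteq> tup A d" using img0 by auto
  have img20: "\<And>g. g \<in> tup A d \<Longrightarrow> g p \<in> {..d} \<and> g(p := 0) \<in> tup (A - {p}) (d - g p)"
  proof -
    fix g assume g: "g \<in> tup A d"
    have s: "(\<Sum>j\<in>A. g j) = g p + (\<Sum>j\<in>A - {p}. g j)"
      using A p by (simp add: sum.remove)
    have s2: "(\<Sum>j\<in>A - {p}. (g(p:=0)) j) = (\<Sum>j\<in>A - {p}. g j)"
      by (rule sum.cong) auto
    show "g p \<in> {..d} \<and> g(p := 0) \<in> tup (A - {p}) (d - g p)" using g s s2 by (auto simp: tup_def)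
  qed
  have img2: "(\<lambda>g. (g p, g(p := 0))) ` tup A d \<subseteq> ?S" using img20 by auto
  have bij: "bij_betw ?h ?S (tup A d)"
    apply (rule bij_betw_byWitness[where f' = "\<lambda>g. (g p, g(p := 0))", OF _ _ img1 img2])
     apply (auto simp: tup_def fun_eq_iff)
    done
  have fin: "\<And>i. finite (tup (A - {p}) (d - i))" using A by (simp add: finite_tup)
  have "tsum A d f = (\<Sum>x\<in>?S. \<Prod>j\<in>A. f j ((?h x) j))"
    unfolding tsum_def by (rule sum.reindex_bij_betw[OF bij, symmetric])
  also have "\<dots> = (\<Sum>(i,g)\<in>?S. \<Prod>j\<in>A. f j ((g(p:=i)) j))"
    by (rule sum.cong) auto
  also have "\<dots> = (\<Sum>i\<le>d. \<Sum>g\<in>tup (A - {p}) (d - i). \<Prod>j\<in>A. f j ((g(p:=i)) j))"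
    by (rule sum.Sigma[symmetric]) (auto simp: fin)
  also have "\<dots> = (\<Sum>i\<le>d. f p i * tsum (A - {p}) (d - i) f)"
  proof (rule sum.cong[OF refl])
    fix i
    have "\<And>g. (\<Prod>j\<in>A. f j ((g(p:=i)) j)) = f p i * (\<Prod>j\<in>A - {p}. f j (g j))"
    proof -
      fix g
      have "(\<Prod>j\<in>A. f j ((g(p:=i)) j)) = f p i * (\<Prod>j\<in>A - {p}. f j ((g(p:=i)) j))"
        using A p by (simp add: prod.remove)
      also have "(\<Prod>j\<in>A - {p}. f j ((g(p:=i)) j)) = (\<Prod>j\<in>A - {p}. f j (g j))"
        by (rule prod.cong) auto
      finally show "(\<Prod>j\<in>A. f j ((g(p:=i)) j)) = f p i * (\<Prod>j\<in>A - {p}. f j (g j))" .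
    qed
    then show "(\<Sum>g\<in>tup (A - {p}) (d - i). \<Prod>j\<in>A. f j ((g(p:=i)) j)) = f p i * tsum (A - {p}) (d - i) f"
      by (simp add: tsum_def sum_distrib_left)
  qed
  finally show ?thesis .
qed

lemma tup_0: "finite A \<Longrightarrow> tup A 0 = {\<lambda>_. 0}"
  by (auto simp: tup_def fun_eq_iff)

lemma tsum_0: "finite A \<Longrightarrow> tsum A 0 f = (\<Prod>j\<in>A. f j 0)"
  by (simp add: tsum_def tup_0)

lemma tsum_delta:
  assumes A: "finite A" and f: "\<And>j i. j \<in> A \<Longrightarrow> f j i = (if i = 0 then 1 else 0)"
  shows "tsum A d f = (if d = 0 then 1 else 0)"
proof (cases "d = 0")
  case True then show ?thesis using A f by (simp add: tsum_0)
next
  case False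
  have "\<And>g. g \<in> tup A d \<Longrightarrow> (\<Prod>j\<in>A. f j (g j)) = 0"
  proof -
    fix g assume g: "g \<in> tup A d"
    then have "(\<Sum>j\<in>A. g j) \<noteq> 0" using False by (simp add: tup_def)
    then obtain j where "j \<in> A" "g j \<noteq> 0" by (meson sum.neutral)
    then show "(\<Prod>j\<in>A. f j (g j)) = 0" using A f by (intro prod_zero) auto
  qed
  then show ?thesis using False by (simp add: tsum_def)
qed

lemma coef_pascal:
  assumes "rp \<noteq> rk"
  shows "(rp - rk) * coef rk rp (Suc n) i + (if i = 0 then 0 else rk * coef rk rp (Suc n) (i - 1))
         = rp * coef rk rp n i"
proof (cases i)
  case 0
  have "rp - rk \<noteq> 0" using assms by simp
  then show ?thesis using 0 by (simp add: coef_def field_simps)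
next
  case (Suc b)
  have q: "rp - rk \<noteq> 0" using assms by simp
  have bin: "real ((n + i) choose i) = real ((n + i - 1) choose i) + real ((n + i - 1) choose b)"
    using Suc by (simp add: add.commute)
  have e1: "coef rk rp (Suc n) i = real ((n + i) choose i) * ((- rk) ^ i * rp ^ Suc n / (rp - rk) ^ (Suc n + i))"
    by (simp add: coef_def)
  have e2: "coef rk rp (Suc n) (i - 1) = real ((n + i - 1) choose b) * ((- rk) ^ b * rp ^ Suc n / (rp - rk) ^ (n + i))"
    using Suc by (simp add: coef_def)
  have e3: "coef rk rp n i = real ((n + i - 1) choose i) * ((- rk) ^ i * rp ^ n / (rp - rk) ^ (n + i))"
    by (simp add: coef_def)
  have rk: "rk * (- rk) ^ b = - ((- rk) ^ i)" using Suc by simp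
  have p1: "(rp - rk) ^ (Suc n + i) = (rp - rk) * (rp - rk) ^ (n + i)" by simp
  define T where "T = (- rk) ^ i * rp ^ Suc n / (rp - rk) ^ (n + i)"
  have h1: "(rp - rk) * coef rk rp (Suc n) i = real ((n + i) choose i) * T"
    unfolding e1 p1 T_def using q by (simp add: field_simps)
  have h2: "rk * coef rk rp (Suc n) (i - 1) = real ((n + i - 1) choose b) * ((rk * (- rk) ^ b) * rp ^ Suc n / (rp - rk) ^ (n + i))"
    unfolding e2 by (simp add: field_simps)
  also have "\<dots> = - (real ((n + i - 1) choose b) * T)"
    unfolding rk T_def by simp
  finally have h2': "rk * coef rk rp (Suc n) (i - 1) = - (real ((n + i - 1) choose b) * T)" .
  have h3: "rp * coef rk rp n i = real ((n + i - 1) choose i) * T"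
    unfolding e3 T_def by (simp add: field_simps)
  have "(rp - rk) * coef rk rp (Suc n) i + (if i = 0 then 0 else rk * coef rk rp (Suc n) (i - 1))
     = real ((n + i) choose i) * T + - (real ((n + i - 1) choose b) * T)"
    using h1 h2' Suc by simp
  also have "\<dots> = real ((n + i - 1) choose i) * T" unfolding bin by (simp add: algebra_simps)
  finally show ?thesis using h3 by simp
qed



definition hdn :: "real \<Rightarrow> nat \<Rightarrow> real" where
  "hdn y g = exp (- y) * y ^ g / fact g"

definition Cc :: "nat \<Rightarrow> (nat \<Rightarrow> real) \<Rightarrow> (nat \<Rightarrow> nat) \<Rightarrow> nat \<Rightarrow> nat \<Rightarrow> real" where
  "Cc m r c k gk = tsum ({1..m} - {k}) (c k - 1 - gk) (\<lambda>j gj. coef (r k) (r j) (c j) gj)"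

definition Phi :: "nat \<Rightarrow> (nat \<Rightarrow> real) \<Rightarrow> (nat \<Rightarrow> nat) \<Rightarrow> real \<Rightarrow> real" where
  "Phi m r c x = (\<Sum>k\<in>{1..m}. \<Sum>gk<c k. Cc m r c k gk * H (r k * x) gk)"

definition Phid :: "nat \<Rightarrow> (nat \<Rightarrow> real) \<Rightarrow> (nat \<Rightarrow> nat) \<Rightarrow> real \<Rightarrow> real" where
  "Phid m r c x = (\<Sum>k\<in>{1..m}. \<Sum>gk<c k. Cc m r c k gk * (- r k * hdn (r k * x) gk))"

lemma H_Suc: "H y (Suc g) = H y g + hdn y (Suc g)"
  by (simp add: H_def hdn_def algebra_simps)

lemma H_0: "H y 0 = exp (- y)" by (simp add: H_def)
lemma hdn_0: "hdn y 0 = exp (- y)" by (simp add: hdn_def)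

lemma H_minus_hd: "H y g - hdn y g = (if g = 0 then 0 else H y (g - 1))"
  by (cases g) (simp_all add: H_0 hdn_0 H_Suc)

lemma hdn_deriv: "((\<lambda>y. hdn y (Suc g)) has_real_derivative (hdn y g - hdn y (Suc g))) (at y)"
proof -
  define F :: real where "F = fact (Suc g)"
  have F: "F = real (Suc g) * fact g" unfolding F_def by (simp add: fact_Suc)
  have Fp: "F > 0" unfolding F_def by simp
  have "((\<lambda>y. (exp (- y) * y ^ Suc g) * (1 / F)) has_real_derivative
     ((exp (- y) * - 1 * y ^ Suc g + real (Suc g) * (1 * y ^ (Suc g - Suc 0)) * exp (- y)) * (1 / F))) (at y)"
    by (rule derivative_eq_intros refl | simp)+
  moreover have "real (Suc g) * y ^ g * exp (- y) * (1 / F) = exp (- y) * y ^ g / fact g"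
    unfolding F by simp
  ultimately show ?thesis unfolding hdn_def F_def[symmetric]
    by (simp add: algebra_simps)
qed

lemma H_deriv: "((\<lambda>y. H y g) has_real_derivative (- hdn y g)) (at y)"
proof (induction g)
  case 0
  show ?case unfolding H_0 hdn_0 by (auto intro!: derivative_eq_intros)
next
  case (Suc g)
  have "((\<lambda>y. H y g + hdn y (Suc g)) has_real_derivative (- hdn y g + (hdn y g - hdn y (Suc g)))) (at y)"
    by (intro DERIV_add Suc hdn_deriv)
  then show ?case by (simp add: H_Suc)
qed

lemma H_scaled_deriv: "((\<lambda>x. H (a * x) g) has_real_derivative (- a * hdn (a * x) g)) (at x)"
proof -
  have "((\<lambda>x. H (a * x) g) has_real_derivative (- hdn (a * x) g) * a) (at x)"
    by (rule DERIV_chain2[OF H_deriv]) (auto intro!: derivative_eq_intros)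
  then show ?thesis by (simp add: algebra_simps)
qed

lemma Phi_deriv: "((Phi m r c) has_real_derivative (Phid m r c x)) (at x)"
  unfolding Phi_def[abs_def] Phid_def
  by (intro DERIV_sum DERIV_cmult H_scaled_deriv)

lemma tsum_cong: "(\<And>j i. j \<in> A \<Longrightarrow> f j i = f' j i) \<Longrightarrow> tsum A d f = tsum A d f'"
  unfolding tsum_def by (intro sum.cong prod.cong refl) auto

lemma Cc_same:
  assumes "p \<in> {1..m}" "g < c p"
  shows "Cc m r (c(p := Suc (c p))) p (Suc g) = Cc m r c p g"
proof -
  have e: "Suc (c p) - 1 - Suc g = c p - 1 - g" using assms by simp
  show ?thesis unfolding Cc_def fun_upd_same e
    by (rule tsum_cong) simp
qed

lemma Cc_other:
  assumes p: "p \<in> {1..m}" and k: "k \<in> {1..m}" and kp: "k \<noteq> p" and rr: "r p \<noteq> r k"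
    and g: "g < c k"
  shows "(r p - r k) * Cc m r (c(p := Suc (c p))) k g
     + (if Suc g < c k then r k * Cc m r (c(p := Suc (c p))) k (Suc g) else 0)
     = r p * Cc m r c k g"
proof -
  define A where "A = {1..m} - {k}"
  have A: "finite A" "p \<in> A" using p kp by (auto simp: A_def)
  define f where "f = (\<lambda>j gj. coef (r k) (r j) (c j) gj)"
  define f' where "f' = (\<lambda>j gj. coef (r k) (r j) ((c(p := Suc (c p))) j) gj)"
  define T where "T = (\<lambda>i. tsum (A - {p}) i f)"
  have T': "\<And>i. tsum (A - {p}) i f' = T i"
    unfolding T_def f_def f'_def by (rule tsum_cong) auto
  define d where "d = c k - 1 - g"
  have "Cc m r (c(p := Suc (c p))) k g = tsum A d f'"
    unfolding Cc_def A_def d_def f'_def using kp by simp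
  then have C1: "Cc m r (c(p := Suc (c p))) k g = (\<Sum>i\<le>d. f' p i * T (d - i))"
    by (simp add: tsum_decomp[OF A] T')
  have "Cc m r c k g = tsum A d f"
    unfolding Cc_def A_def d_def f_def by simp
  then have C0: "Cc m r c k g = (\<Sum>i\<le>d. f p i * T (d - i))"
    by (simp add: tsum_decomp[OF A] T_def)
  have C2: "(if Suc g < c k then r k * Cc m r (c(p := Suc (c p))) k (Suc g) else 0)
      = (\<Sum>i\<le>d. (if i = 0 then 0 else r k * f' p (i - 1)) * T (d - i))"
  proof (cases d)
    case 0
    then have "\<not> Suc g < c k" using g by (simp add: d_def)
    then show ?thesis using 0 by simp
  next
    case (Suc d')
    then have sg: "Suc g < c k" using g by (simp add: d_def)
    have "c k - 1 - Suc g = d'" using Suc by (simp add: d_def)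
    then have "Cc m r (c(p := Suc (c p))) k (Suc g) = tsum A d' f'"
      unfolding Cc_def A_def f'_def using kp by simp
    then have "Cc m r (c(p := Suc (c p))) k (Suc g) = (\<Sum>i\<le>d'. f' p i * T (d' - i))"
      by (simp add: tsum_decomp[OF A] T')
    moreover have "(\<Sum>i\<le>d. (if i = 0 then 0 else r k * f' p (i - 1)) * T (d - i))
        = (\<Sum>i\<le>d'. r k * f' p i * T (d' - i))"
      unfolding Suc by (subst sum.atMost_Suc_shift) simp
    ultimately show ?thesis using sg by (simp add: sum_distrib_left mult.assoc)
  qed
  have pas: "\<And>i. (r p - r k) * f' p i + (if i = 0 then 0 else r k * f' p (i - 1)) = r p * f p i"
    unfolding f_def f'_def fun_upd_same by (rule coef_pascal[OF rr])
  have "(r p - r k) * Cc m r (c(p := Suc (c p))) k g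
     + (if Suc g < c k then r k * Cc m r (c(p := Suc (c p))) k (Suc g) else 0)
     = (\<Sum>i\<le>d. ((r p - r k) * f' p i + (if i = 0 then 0 else r k * f' p (i - 1))) * T (d - i))"
    unfolding C1 C2 by (simp add: sum_distrib_left sum.distrib[symmetric] algebra_simps)
  also have "\<dots> = r p * Cc m r c k g"
    unfolding C0 pas by (simp add: sum_distrib_left mult.assoc)
  finally show ?thesis .
qed

lemma shift_sum:
  fixes a b :: "nat \<Rightarrow> real"
  shows "(\<Sum>g<N. a g * (if g = 0 then 0 else b (g - 1))) = (\<Sum>g<N. (if Suc g < N then a (Suc g) else 0) * b g)"
proof (cases N)
  case 0 then show ?thesis by simp
next
  case (Suc N')
  have "(\<Sum>g<N. a g * (if g = 0 then 0 else b (g - 1))) = (\<Sum>g<N'. a (Suc g) * b g)"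
    unfolding Suc by (subst sum.lessThan_Suc_shift) simp
  moreover have "(\<Sum>g<N. (if Suc g < N then a (Suc g) else 0) * b g) = (\<Sum>g<N'. a (Suc g) * b g)"
    unfolding Suc by (simp add: sum.lessThan_Suc)
  ultimately show ?thesis by simp
qed

lemma Phi_ode:
  assumes p: "p \<in> {1..m}" and rr: "\<And>k. k \<in> {1..m} \<Longrightarrow> k \<noteq> p \<Longrightarrow> r p \<noteq> r k"
  shows "Phid m r (c(p := Suc (c p))) x + r p * Phi m r (c(p := Suc (c p))) x = r p * Phi m r c x"
proof -
  let ?c' = "c(p := Suc (c p))"
  let ?Hk = "\<lambda>k g. H (r k * x) g"
  have key: "\<And>k g. - r k * hdn (r k * x) g + r p * ?Hk k g
      = (r p - r k) * ?Hk k g + r k * (if g = 0 then 0 else ?Hk k (g - 1))"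
  proof -
    fix k g
    have "?Hk k g - hdn (r k * x) g = (if g = 0 then 0 else ?Hk k (g - 1))" by (rule H_minus_hd)
    then show "- r k * hdn (r k * x) g + r p * ?Hk k g
      = (r p - r k) * ?Hk k g + r k * (if g = 0 then 0 else ?Hk k (g - 1))"
      by (simp add: algebra_simps)
  qed
  have perk: "(\<Sum>g<?c' k. Cc m r ?c' k g * (- r k * hdn (r k * x) g)) + r p * (\<Sum>g<?c' k. Cc m r ?c' k g * ?Hk k g)
      = r p * (\<Sum>g<c k. Cc m r c k g * ?Hk k g)" if k: "k \<in> {1..m}" for k
  proof -
    have "(\<Sum>g<?c' k. Cc m r ?c' k g * (- r k * hdn (r k * x) g)) + r p * (\<Sum>g<?c' k. Cc m r ?c' k g * ?Hk k g)
       = (\<Sum>g<?c' k. Cc m r ?c' k g * (- r k * hdn (r k * x) g + r p * ?Hk k g))"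
      by (simp add: sum_distrib_left sum.distrib[symmetric] algebra_simps)
    also have "\<dots> = (\<Sum>g<?c' k. Cc m r ?c' k g * ((r p - r k) * ?Hk k g)) +
          r k * (\<Sum>g<?c' k. Cc m r ?c' k g * (if g = 0 then 0 else ?Hk k (g - 1)))"
      unfolding key by (simp add: sum_distrib_left sum.distrib[symmetric] algebra_simps)
    also have "\<dots> = (\<Sum>g<?c' k. Cc m r ?c' k g * ((r p - r k) * ?Hk k g)) +
          r k * (\<Sum>g<?c' k. (if Suc g < ?c' k then Cc m r ?c' k (Suc g) else 0) * ?Hk k g)"
      by (subst shift_sum) (rule refl)
    also have "\<dots> = r p * (\<Sum>g<c k. Cc m r c k g * ?Hk k g)"
    proof (cases "k = p")
      case True
      have "(\<Sum>g<?c' k. (if Suc g < ?c' k then Cc m r ?c' k (Suc g) else 0) * ?Hk k g)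
          = (\<Sum>g<Suc (c p). (if g < c p then Cc m r c p g else 0) * ?Hk p g)"
        using True p by (intro sum.cong) (auto simp: Cc_same)
      also have "\<dots> = (\<Sum>g<c p. Cc m r c p g * ?Hk p g)"
        by (simp add: sum.lessThan_Suc)
      finally show ?thesis using True by simp
    next
      case False
      have ck: "?c' k = c k" using False by simp
      have "(\<Sum>g<?c' k. Cc m r ?c' k g * ((r p - r k) * ?Hk k g)) +
          r k * (\<Sum>g<?c' k. (if Suc g < ?c' k then Cc m r ?c' k (Suc g) else 0) * ?Hk k g)
          = (\<Sum>g<c k. ((r p - r k) * Cc m r ?c' k g +
              (if Suc g < c k then r k * Cc m r ?c' k (Suc g) else 0)) * ?Hk k g)"
        unfolding ck by (auto simp: sum_distrib_left sum.distrib[symmetric] algebra_simps intro!: sum.cong)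
      also have "\<dots> = (\<Sum>g<c k. (r p * Cc m r c k g) * ?Hk k g)"
        using Cc_other[OF p k False rr[OF k False]] by (intro sum.cong) auto
      finally show ?thesis by (simp add: sum_distrib_left mult.assoc)
    qed
    finally show ?thesis .
  qed
  have "Phid m r ?c' x + r p * Phi m r ?c' x = (\<Sum>k\<in>{1..m}. (\<Sum>g<?c' k. Cc m r ?c' k g * (- r k * hdn (r k * x) g)) + r p * (\<Sum>g<?c' k. Cc m r ?c' k g * ?Hk k g))"
    unfolding Phi_def Phid_def by (simp only: sum.distrib sum_distrib_left)
  also have "\<dots> = (\<Sum>k\<in>{1..m}. r p * (\<Sum>g<c k. Cc m r c k g * ?Hk k g))"
    by (rule sum.cong[OF refl]) (rule perk)
  also have "\<dots> = r p * Phi m r c x"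
    unfolding Phi_def by (simp only: sum_distrib_left)
  finally show ?thesis .
qed



lemma Phi_ftc:
  assumes p: "p \<in> {1..m}" and rr: "\<And>k. k \<in> {1..m} \<Longrightarrow> k \<noteq> p \<Longrightarrow> r p \<noteq> r k"
    and w: "w > 0" and rp: "r p = 1 / w" and t: "t \<ge> 0"
  shows "((\<lambda>z. Phi m r c (t + w * ln z)) has_integral
           (Phi m r (c(p := Suc (c p))) t - exp (- (r p * t)) * Phi m r (c(p := Suc (c p))) 0))
         {exp (- (r p * t))..1}"
proof -
  let ?c' = "c(p := Suc (c p))"
  let ?a = "exp (- (r p * t))"
  have a1: "?a \<le> 1" using t w rp by simp
  have apos: "?a > 0" by simp
  have der: "((\<lambda>z. z * Phi m r ?c' (t + w * ln z)) has_real_derivative Phi m r c (t + w * ln z)) (at z)"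
    if z: "z > 0" for z
  proof -
    have d1: "((\<lambda>z. t + w * ln z) has_real_derivative (w * (1 / z))) (at z)"
      using z by (auto intro!: derivative_eq_intros)
    have d2: "((\<lambda>z. Phi m r ?c' (t + w * ln z)) has_real_derivative (Phid m r ?c' (t + w * ln z) * (w * (1 / z)))) (at z)"
      by (rule DERIV_chain2[OF Phi_deriv d1])
    have d3: "((\<lambda>z. z * Phi m r ?c' (t + w * ln z)) has_real_derivative
        (1 * Phi m r ?c' (t + w * ln z) + z * (Phid m r ?c' (t + w * ln z) * (w * (1 / z))))) (at z)"
      using DERIV_mult'[OF DERIV_ident d2] by (simp add: algebra_simps)
    have "1 * Phi m r ?c' (t + w * ln z) + z * (Phid m r ?c' (t + w * ln z) * (w * (1 / z)))
        = w * (Phid m r ?c' (t + w * ln z) + r p * Phi m r ?c' (t + w * ln z))"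
      using z w rp by (simp add: field_simps)
    also have "\<dots> = w * (r p * Phi m r c (t + w * ln z))"
      using Phi_ode[where p=p and m=m and r=r and c=c and x="t + w * ln z", OF p rr] by simp
    also have "\<dots> = Phi m r c (t + w * ln z)" using w rp by simp
    finally show ?thesis using d3 by simp
  qed
  have "((\<lambda>z. Phi m r c (t + w * ln z)) has_integral
      (1 * Phi m r ?c' (t + w * ln 1) - ?a * Phi m r ?c' (t + w * ln ?a))) {?a..1}"
    apply (rule fundamental_theorem_of_calculus[OF a1])
    apply (rule has_vector_derivative_at_within)
    apply (subst has_real_derivative_iff_has_vector_derivative[symmetric])
    apply (rule der)
    apply (metis exp_gt_zero order.strict_trans2 atLeastAtMost_iff)
    done
  moreover have e: "t + w * ln ?a = 0" using w rp by simp
  ultimately show ?thesis by (simp only: e ln_one mult_zero_right add_0_right mult_1)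
qed

lemma coef_zero: "coef rk rj 0 i = (if i = 0 then 1 else 0)"
  by (cases i) (simp_all add: coef_def)

lemma Phi_single:
  assumes p: "p \<in> {1..m}" and oth: "\<And>k. k \<in> {1..m} \<Longrightarrow> k \<noteq> p \<Longrightarrow> c k = 0" and cp: "c p \<ge> 1"
  shows "Phi m r c x = H (r p * x) (c p - 1)"
proof -
  have "Phi m r c x = (\<Sum>gk<c p. Cc m r c p gk * H (r p * x) gk)"
    unfolding Phi_def
    by (subst sum.remove[OF _ p]) (auto simp: oth intro!: sum.neutral)
  also have "\<dots> = (\<Sum>gk<c p. (if gk = c p - 1 then 1 else 0) * H (r p * x) gk)"
  proof (rule sum.cong[OF refl])
    fix gk assume gk: "gk \<in> {..<c p}"
    have "Cc m r c p gk = (if c p - 1 - gk = 0 then 1 else 0)"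
      unfolding Cc_def by (rule tsum_delta) (auto simp: oth coef_zero)
    also have "\<dots> = (if gk = c p - 1 then 1 else 0)" using gk by auto
    finally show "Cc m r c p gk * H (r p * x) gk = (if gk = c p - 1 then 1 else 0) * H (r p * x) gk" by simp
  qed
  also have "\<dots> = H (r p * x) (c p - 1)"
  proof -
    have "(\<Sum>gk<c p. (if gk = c p - 1 then 1 else 0) * H (r p * x) gk) = (\<Sum>gk<c p. (if gk = c p - 1 then H (r p * x) gk else 0))"
      by (rule sum.cong) auto
    also have "\<dots> = H (r p * x) (c p - 1)" using cp by (subst sum.delta) auto
    finally show ?thesis .
  qed
  finally show ?thesis .
qed



context prob_space
begin

lemma step_prob:
  fixes S :: "'a \<Rightarrow> real" and Z :: "'a \<Rightarrow> real"
  assumes indep: "indep_var borel Z borel S"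
    and Zd: "distr M borel Z = uniform_measure lborel {0<..1}"
    and Snn: "AE \<omega> in M. S \<omega> \<ge> 0"
    and w: "w > 0" and rw: "r = 1 / w" and x: "x \<ge> 0"
  shows "emeasure M {\<omega>\<in>space M. x \<le> S \<omega> + w * - ln (Z \<omega>)} =
     ennreal (exp (- (r * x))) + (\<integral>\<^sup>+z. ennreal (prob {\<omega>\<in>space M. x + w * ln z \<le> S \<omega>}) * indicator {exp (- (r * x))<..1} z \<partial>lborel)"
proof -
  have rvZ[measurable]: "Z \<in> borel_measurable M" and rvS[measurable]: "S \<in> borel_measurable M"
    using indep by (auto dest: indep_var_rv1 indep_var_rv2)
  define DZ where "DZ = distr M borel Z"
  define DS where "DS = distr M borel S"
  interpret DZ: prob_space DZ unfolding DZ_def by (rule prob_space_distr) simp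
  interpret DS: prob_space DS unfolding DS_def by (rule prob_space_distr) simp
  have pair: "DZ \<Otimes>\<^sub>M DS = distr M (borel \<Otimes>\<^sub>M borel) (\<lambda>\<omega>. (Z \<omega>, S \<omega>))"
    using indep unfolding DZ_def DS_def by (simp add: indep_var_distribution_eq)
  define B where "B = {p :: real \<times> real. x \<le> snd p + w * - ln (fst p)}"
  have B[measurable]: "B \<in> sets (borel \<Otimes>\<^sub>M borel)"
  proof -
    have m1: "{p \<in> space (borel \<Otimes>\<^sub>M borel). x \<le> snd p + w * - ln (fst p)} \<in> sets (borel \<Otimes>\<^sub>M borel)"
      by measurable
    have eqB: "{p \<in> space (borel \<Otimes>\<^sub>M borel). x \<le> snd p + w * - ln (fst p)} = B"
      by (auto simp: B_def space_pair_measure)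
    show ?thesis using m1 unfolding eqB .
  qed
  have BZS: "B \<in> sets (DZ \<Otimes>\<^sub>M DS)" using B unfolding DZ_def DS_def by (metis sets_distr sets_pair_measure_cong)
  have "emeasure M {\<omega>\<in>space M. x \<le> S \<omega> + w * - ln (Z \<omega>)}
      = emeasure (distr M (borel \<Otimes>\<^sub>M borel) (\<lambda>\<omega>. (Z \<omega>, S \<omega>))) B"
    by (subst emeasure_distr[OF measurable_Pair[OF rvZ rvS] B]) (auto simp: B_def intro!: arg_cong[where f="emeasure M"])
  also have "\<dots> = emeasure (DZ \<Otimes>\<^sub>M DS) B" unfolding pair ..
  also have "\<dots> = (\<integral>\<^sup>+z. emeasure DS (Pair z -` B) \<partial>DZ)"
    by (rule DS.emeasure_pair_measure_alt[OF BZS])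
  finally have e1: "emeasure M {\<omega>\<in>space M. x \<le> S \<omega> + w * - ln (Z \<omega>)} = (\<integral>\<^sup>+z. emeasure DS (Pair z -` B) \<partial>DZ)" .
  have phim: "(\<lambda>z. emeasure DS (Pair z -` B)) \<in> borel_measurable lborel"
  proof -
    have "(\<lambda>z. emeasure DS (Pair z -` B)) \<in> borel_measurable DZ"
      by (rule DS.measurable_emeasure_Pair[OF BZS])
    then show ?thesis unfolding DZ_def by (simp cong: measurable_cong_sets)
  qed
  have e2: "(\<integral>\<^sup>+z. emeasure DS (Pair z -` B) \<partial>DZ) = (\<integral>\<^sup>+z. emeasure DS (Pair z -` B) * indicator {0<..1} z \<partial>lborel)"
    unfolding DZ_def Zd using phim by (subst nn_integral_uniform_measure) (auto simp: divide_ennreal_def)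
  define a where "a = exp (- (r * x))"
  have a: "0 < a" "a \<le> 1" using x w rw by (auto simp: a_def)
  have phival: "emeasure DS (Pair z -` B) = ennreal (prob {\<omega>\<in>space M. x + w * ln z \<le> S \<omega>})" for z
  proof -
    have "emeasure DS (Pair z -` B) = emeasure M (S -` (Pair z -` B) \<inter> space M)"
      unfolding DS_def
      by (rule emeasure_distr) (auto simp: B_def)
    also have "S -` (Pair z -` B) \<inter> space M = {\<omega>\<in>space M. x + w * ln z \<le> S \<omega>}"
      by (auto simp: B_def)
    finally show ?thesis by (simp add: emeasure_eq_measure)
  qed
  have one: "prob {\<omega>\<in>space M. y \<le> S \<omega>} = 1" if "y \<le> 0" for y
  proof -
    have "AE \<omega> in M. y \<le> S \<omega>" using Snn that by (auto elim!: eventually_mono)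
    then show ?thesis by (subst prob_Collect_eq_1) auto
  qed
  have split: "emeasure DS (Pair z -` B) * indicator {0<..1} z
      = indicator {0<..a} z + emeasure DS (Pair z -` B) * indicator {a<..1} z" for z
  proof (cases "0 < z \<and> z \<le> a")
    case True
    then have "ln z \<le> ln a" by simp
    then have l: "ln z \<le> - (x / w)" using rw by (simp add: a_def)
    then have "w * ln z \<le> w * (- (x / w))" using w by (intro mult_left_mono) auto
    then have "x + w * ln z \<le> 0" using w by simp
    then show ?thesis using True a by (simp add: phival one indicator_def)
  next
    case False
    then show ?thesis using a by (auto simp: indicator_def)
  qed
  have "(\<integral>\<^sup>+z. emeasure DS (Pair z -` B) * indicator {0<..1} z \<partial>lborel)
      = (\<integral>\<^sup>+z. indicator {0<..a} z \<partial>lborel) + (\<integral>\<^sup>+z. emeasure DS (Pair z -` B) * indicator {a<..1} z \<partial>lborel)"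
    unfolding split using phim by (intro nn_integral_add) auto
  also have "(\<integral>\<^sup>+z. indicator {0<..a} z \<partial>lborel) = ennreal a"
    using a by simp
  also have "(\<integral>\<^sup>+z. emeasure DS (Pair z -` B) * indicator {a<..1} z \<partial>lborel)
      = (\<integral>\<^sup>+z. ennreal (prob {\<omega>\<in>space M. x + w * ln z \<le> S \<omega>}) * indicator {a<..1} z \<partial>lborel)"
    by (simp add: phival)
  finally show ?thesis using e1 e2 by (simp add: a_def)
qed

end



locale comb = prob_space M for M :: "'a measure" +
  fixes m :: nat and n :: "nat \<Rightarrow> nat" and w :: "nat \<Rightarrow> real" and X :: "nat \<times> nat \<Rightarrow> 'a \<Rightarrow> real"
  assumes wpos: "\<forall>k\<in>{1..m}. w k > 0" and winj: "inj_on w {1..m}"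
    and ind: "indep_vars (\<lambda>_. borel) X {(k, j). k \<in> {1..m} \<and> j \<in> {1..n k}}"
    and unif: "\<forall>k\<in>{1..m}. \<forall>j\<in>{1..n k}. distr M borel (X (k, j)) = uniform_measure lborel {0<..1}"
begin

definition J :: "(nat \<times> nat) set" where "J = {(k, j). k \<in> {1..m} \<and> j \<in> {1..n k}}"
definition r :: "nat \<Rightarrow> real" where "r k = 1 / w k"
definition Ic :: "(nat \<Rightarrow> nat) \<Rightarrow> (nat \<times> nat) set" where "Ic c = {(k,j). k \<in> {1..m} \<and> j \<in> {1..c k}}"
definition S :: "(nat \<Rightarrow> nat) \<Rightarrow> 'a \<Rightarrow> real" where "S c \<omega> = (\<Sum>i\<in>Ic c. w (fst i) * - ln (X i \<omega>))"
definition F :: "(nat \<Rightarrow> nat) \<Rightarrow> real \<Rightarrow> real" where "F c y = prob {\<omega>\<in>space M. y \<le> S c \<omega>}"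
definition le :: "(nat \<Rightarrow> nat) \<Rightarrow> bool" where "le c \<longleftrightarrow> (\<forall>k\<in>{1..m}. c k \<le> n k)"

lemma finite_J: "finite J"
proof -
  have "J = Sigma {1..m} (\<lambda>k. {1..n k})" by (auto simp: J_def)
  then show ?thesis by (simp only:) (intro finite_SigmaI; simp)
qed

lemma finite_Ic: "finite (Ic c)"
proof -
  have "Ic c = Sigma {1..m} (\<lambda>k. {1..c k})" by (auto simp: Ic_def)
  then show ?thesis by (simp only:) (intro finite_SigmaI; simp)
qed

lemma Ic_sub: "le c \<Longrightarrow> Ic c \<subseteq> J"
  by (auto simp: Ic_def J_def le_def intro: order_trans)

lemma X_meas: "i \<in> J \<Longrightarrow> X i \<in> borel_measurable M"
  using ind unfolding indep_vars_def J_def by auto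

lemma S_meas: "le c \<Longrightarrow> S c \<in> borel_measurable M"
  unfolding S_def[abs_def] using Ic_sub X_meas
  by (intro borel_measurable_sum borel_measurable_times borel_measurable_const borel_measurable_uminus borel_measurable_ln) auto

lemma AE_X: "AE \<omega> in M. \<forall>i\<in>J. X i \<omega> \<in> {0<..1}"
proof (rule AE_finite_allI[OF finite_J])
  fix i assume i: "i \<in> J"
  then obtain k j where kj: "i = (k, j)" "k \<in> {1..m}" "j \<in> {1..n k}" by (auto simp: J_def)
  have d: "distr M borel (X i) = uniform_measure lborel {0<..1}" using unif kj by auto
  have "AE z in uniform_measure lborel {0<..1::real}. z \<in> {0<..1}"
    by (rule AE_uniform_measureI) (auto simp: greaterThanAtMost_borel)
  then have "AE z in distr M borel (X i). z \<in> {0<..1}" unfolding d .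
  then show "AE \<omega> in M. X i \<omega> \<in> {0<..1}"
    by (rule AE_distrD[OF X_meas[OF i]])
qed

lemma S_nn: assumes "le c" shows "AE \<omega> in M. S c \<omega> \<ge> 0"
  using AE_X
proof (rule eventually_mono)
  fix \<omega> assume h: "\<forall>i\<in>J. X i \<omega> \<in> {0<..1}"
  show "S c \<omega> \<ge> 0" unfolding S_def
  proof (rule sum_nonneg)
    fix i assume i: "i \<in> Ic c"
    then have "i \<in> J" using Ic_sub[OF assms] by auto
    then have x: "0 < X i \<omega>" "X i \<omega> \<le> 1" using h by auto
    have "ln (X i \<omega>) \<le> 0" using x by simp
    moreover have "w (fst i) > 0" using i wpos by (auto simp: Ic_def)
    ultimately show "0 \<le> w (fst i) * - ln (X i \<omega>)" by (simp add: mult_nonneg_nonpos)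
  qed
qed

lemma Ic_insert:
  assumes "p \<in> {1..m}"
  shows "Ic (c(p := Suc (c p))) = insert (p, Suc (c p)) (Ic c)" and "(p, Suc (c p)) \<notin> Ic c"
  using assms by (auto simp: Ic_def split: if_splits)

lemma S_insert:
  assumes "p \<in> {1..m}"
  shows "S (c(p := Suc (c p))) \<omega> = S c \<omega> + w p * - ln (X (p, Suc (c p)) \<omega>)"
  unfolding S_def Ic_insert[OF assms] by (simp add: sum.insert[OF finite_Ic Ic_insert(2)[OF assms]])

lemma indep_step:
  assumes p: "p \<in> {1..m}" and le: "le (c(p := Suc (c p)))"
  shows "indep_var borel (X (p, Suc (c p))) borel (S c)"
proof -
  let ?i = "(p, Suc (c p))"
  have ind': "indep_vars (\<lambda>_. borel) X (insert ?i (Ic c))"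
    using indep_vars_subset[OF ind] Ic_sub[OF le] unfolding Ic_insert[OF p] J_def by blast
  have "indep_var borel ((\<lambda>f. f ?i) \<circ> (\<lambda>\<omega>. restrict (\<lambda>i. X i \<omega>) {?i}))
      borel ((\<lambda>f. \<Sum>i\<in>Ic c. w (fst i) * - ln (f i)) \<circ> (\<lambda>\<omega>. restrict (\<lambda>i. X i \<omega>) (Ic c)))"
    using Ic_insert(2)[OF p]
    by (intro indep_var_compose[OF indep_var_restrict[OF ind']]) auto
  also have "((\<lambda>f. f ?i) \<circ> (\<lambda>\<omega>. restrict (\<lambda>i. X i \<omega>) {?i})) = X ?i"
    by auto
  also have "((\<lambda>f. \<Sum>i\<in>Ic c. w (fst i) * - ln (f i)) \<circ> (\<lambda>\<omega>. restrict (\<lambda>i. X i \<omega>) (Ic c))) = S c"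
    by (auto simp: S_def fun_eq_iff intro!: sum.cong)
  finally show ?thesis .
qed

lemma emeasure_step:
  assumes p: "p \<in> {1..m}" and le: "le (c(p := Suc (c p)))" and x: "x \<ge> 0"
  shows "emeasure M {\<omega>\<in>space M. x \<le> S (c(p := Suc (c p))) \<omega>} =
     ennreal (exp (- (r p * x))) + (\<integral>\<^sup>+z. ennreal (F c (x + w p * ln z)) * indicator {exp (- (r p * x))<..1} z \<partial>lborel)"
proof -
  have lec: "le c" using le p unfolding le_def by (metis fun_upd_apply le_SucE Suc_leD)
  have "(c(p := Suc (c p))) p \<le> n p" using le p unfolding le_def by blast
  then have pn: "Suc (c p) \<le> n p" by simp
  have "distr M borel (X (p, Suc (c p))) = uniform_measure lborel {0<..1}"
    using unif p pn by auto
  from step_prob[OF indep_step[OF p le] this S_nn[OF lec], of "w p" "r p" x] wpos p x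
  show ?thesis by (simp add: S_insert[OF p] F_def r_def)
qed

end



lemma H_zero: "H 0 g = 1"
  by (induction g) (simp_all add: H_Suc H_0 hdn_def)

context comb
begin

lemma r_ne: assumes "p \<in> {1..m}" "k \<in> {1..m}" "k \<noteq> p" shows "r p \<noteq> r k"
proof
  assume "r p = r k"
  then have "w p = w k" using wpos assms by (auto simp: r_def)
  then show False using winj assms by (auto dest: inj_onD)
qed

lemma r_pos: "p \<in> {1..m} \<Longrightarrow> r p > 0" using wpos by (auto simp: r_def)

lemma step_main:
  assumes p: "p \<in> {1..m}" and le: "le (c(p := Suc (c p)))"
    and IH: "\<And>y. y \<ge> 0 \<Longrightarrow> F c y = Phi m r c y" and x: "x \<ge> 0"
  shows "F (c(p := Suc (c p))) x = Phi m r (c(p := Suc (c p))) x + (1 - Phi m r (c(p := Suc (c p))) 0) * exp (- (r p * x))"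
proof -
  let ?c' = "c(p := Suc (c p))"
  define a where "a = exp (- (r p * x))"
  define I where "I = Phi m r ?c' x - a * Phi m r ?c' 0"
  have wp: "w p > 0" using wpos p by auto
  have rp: "r p = 1 / w p" by (simp add: r_def)
  have int: "((\<lambda>z. Phi m r c (x + w p * ln z)) has_integral I) {a..1}"
    unfolding I_def a_def by (rule Phi_ftc[where p=p and m=m and r=r and c=c, OF p r_ne[OF p] wp rp x]) auto
  have apos: "a > 0" by (simp add: a_def)
  have range: "x + w p * ln z \<in> {0..x}" if z: "z \<in> {a..1}" for z
  proof -
    have zpos: "z > 0" using z apos by auto
    have "ln a \<le> ln z" using z apos zpos by auto
    then have "- (r p * x) \<le> ln z" by (simp add: a_def)
    then have "w p * (- (r p * x)) \<le> w p * ln z" using wp by (intro mult_left_mono) auto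
    then have lo: "- x \<le> w p * ln z" using wp by (simp add: rp)
    have "ln z \<le> 0" using z zpos by auto
    then have "w p * ln z \<le> 0" using wp by (simp add: mult_nonneg_nonpos)
    then show ?thesis using lo by auto
  qed
  have nonneg: "0 \<le> Phi m r c (x + w p * ln z)" if "z \<in> {a..1}" for z
  proof -
    have "F c (x + w p * ln z) = Phi m r c (x + w p * ln z)" using IH range[OF that] by auto
    moreover have "F c (x + w p * ln z) \<ge> 0" unfolding F_def by (rule measure_nonneg)
    ultimately show ?thesis by simp
  qed
  have I0: "I \<ge> 0" using has_integral_nonneg[OF int nonneg] by simp
  have nn: "(\<integral>\<^sup>+z. ennreal (Phi m r c (x + w p * ln z)) * indicator {a..1} z \<partial>lborel) = ennreal I"
    by (rule nn_integral_has_integral_lebesgue'[OF nonneg int])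
  have cong: "(\<integral>\<^sup>+z. ennreal (F c (x + w p * ln z)) * indicator {a<..1} z \<partial>lborel)
      = (\<integral>\<^sup>+z. ennreal (Phi m r c (x + w p * ln z)) * indicator {a..1} z \<partial>lborel)"
  proof (rule nn_integral_cong_AE)
    show "AE z in lborel. ennreal (F c (x + w p * ln z)) * indicator {a<..1} z
        = ennreal (Phi m r c (x + w p * ln z)) * indicator {a..1} z"
      using AE_lborel_singleton[of a]
    proof (rule eventually_mono)
      fix z :: real assume za: "z \<noteq> a"
      show "ennreal (F c (x + w p * ln z)) * indicator {a<..1} z
        = ennreal (Phi m r c (x + w p * ln z)) * indicator {a..1} z"
      proof (cases "z \<in> {a..1}")
        case True
        then have "z \<in> {a<..1}" using za by auto
        then show ?thesis using True IH[of "x + w p * ln z"] range[OF True] by auto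
      next
        case False then show ?thesis by auto
      qed
    qed
  qed
  have "emeasure M {\<omega>\<in>space M. x \<le> S ?c' \<omega>} = ennreal a + ennreal I"
    using emeasure_step[OF p le x] cong nn by (simp add: a_def)
  also have "\<dots> = ennreal (a + I)" using apos I0 by simp
  finally have e: "ennreal (F ?c' x) = ennreal (a + I)"
    unfolding F_def by (simp add: emeasure_eq_measure del: ennreal_plus)
  have "F ?c' x = a + I"
    using e apos I0 by (subst (asm) ennreal_inj) (auto simp: F_def)
  then show ?thesis by (simp add: I_def a_def algebra_simps)
qed

lemma step_base:
  assumes p: "p \<in> {1..m}" and le: "le (c(p := Suc (c p)))"
    and z: "\<And>k. k \<in> {1..m} \<Longrightarrow> c k = 0" and x: "x \<ge> 0"
  shows "F (c(p := Suc (c p))) x = exp (- (r p * x))"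
proof -
  define a where "a = exp (- (r p * x))"
  have wp: "w p > 0" using wpos p by auto
  have rp: "r p = 1 / w p" by (simp add: r_def)
  have Ic0: "Ic c = {}" using z by (auto simp: Ic_def)
  have F0: "F c y = 0" if "y > 0" for y
    using that by (simp add: F_def S_def Ic0)
  have "(\<integral>\<^sup>+z. ennreal (F c (x + w p * ln z)) * indicator {a<..1} z \<partial>lborel) = (\<integral>\<^sup>+(z::real). 0 \<partial>lborel)"
  proof (rule nn_integral_cong)
    fix z :: real
    show "ennreal (F c (x + w p * ln z)) * indicator {a<..1} z = 0"
    proof (cases "z \<in> {a<..1}")
      case True
      have apos: "a > 0" by (simp add: a_def)
      then have "ln a < ln z" using True by auto
      then have "- (r p * x) < ln z" by (simp add: a_def)
      then have "w p * (- (r p * x)) < w p * ln z" using wp by (intro mult_strict_left_mono) auto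
      then have "0 < x + w p * ln z" using wp by (simp add: rp)
      then show ?thesis by (simp add: F0)
    next
      case False then show ?thesis by simp
    qed
  qed
  then have "emeasure M {\<omega>\<in>space M. x \<le> S (c(p := Suc (c p))) \<omega>} = ennreal a"
    using emeasure_step[OF p le x] by (simp add: a_def)
  then show ?thesis unfolding F_def by (simp add: emeasure_eq_measure a_def)
qed

end



context comb
begin

lemma dec_facts:
  assumes p: "p \<in> {1..m}" and cp: "c p > 0"
  shows "(c(p := c p - 1))(p := Suc ((c(p := c p - 1)) p)) = c"
    and "le c \<Longrightarrow> le (c(p := c p - 1))"
    and "(\<Sum>k\<in>{1..m}. (c(p := c p - 1)) k) < (\<Sum>k\<in>{1..m}. c k)"
proof -
  show "(c(p := c p - 1))(p := Suc ((c(p := c p - 1)) p)) = c"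
    using cp by (auto simp: fun_eq_iff)
  show "le c \<Longrightarrow> le (c(p := c p - 1))"
  proof -
    assume l: "le c"
    show "le (c(p := c p - 1))" unfolding le_def
    proof
      fix k assume k: "k \<in> {1..m}"
      have "(c(p := c p - 1)) k \<le> c k" by simp
      also have "c k \<le> n k" using l k by (auto simp: le_def)
      finally show "(c(p := c p - 1)) k \<le> n k" .
    qed
  qed
  have "(\<Sum>k\<in>{1..m}. (c(p := c p - 1)) k) = (c p - 1) + (\<Sum>k\<in>{1..m} - {p}. (c(p := c p - 1)) k)"
    using p by (simp add: sum.remove)
  also have "(\<Sum>k\<in>{1..m} - {p}. (c(p := c p - 1)) k) = (\<Sum>k\<in>{1..m} - {p}. c k)"
    by (rule sum.cong) auto
  also have "(c p - 1) + (\<Sum>k\<in>{1..m} - {p}. c k) < c p + (\<Sum>k\<in>{1..m} - {p}. c k)"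
    using cp by simp
  also have "\<dots> = (\<Sum>k\<in>{1..m}. c k)"
    using p by (simp add: sum.remove)
  finally show "(\<Sum>k\<in>{1..m}. (c(p := c p - 1)) k) < (\<Sum>k\<in>{1..m}. c k)" .
qed

lemma main_ind:
  "le c \<Longrightarrow> (\<exists>k\<in>{1..m}. c k > 0) \<Longrightarrow> x \<ge> 0 \<Longrightarrow> F c x = Phi m r c x"
proof (induction "\<Sum>k\<in>{1..m}. c k" arbitrary: c x rule: less_induct)
  case (less c x)
  obtain p where p: "p \<in> {1..m}" "c p > 0" using less.prems by auto
  define c0 where "c0 = c(p := c p - 1)"
  have c0eq: "c0(p := Suc (c0 p)) = c" unfolding c0_def by (rule dec_facts(1)[where p=p and c=c, OF p])
  have lec0: "le c0" unfolding c0_def by (rule dec_facts(2)[where p=p and c=c, OF p less.prems(1)])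
  have sc0: "(\<Sum>k\<in>{1..m}. c0 k) < (\<Sum>k\<in>{1..m}. c k)" unfolding c0_def by (rule dec_facts(3)[where p=p and c=c, OF p])
  have lec': "le (c0(p := Suc (c0 p)))" unfolding c0eq by (rule less.prems(1))
  show ?case
  proof (cases "\<exists>q\<in>{1..m}. q \<noteq> p \<and> c q > 0")
    case True
    then obtain q where q: "q \<in> {1..m}" "q \<noteq> p" "c q > 0" by auto
    define c1 where "c1 = c(q := c q - 1)"
    have c1eq: "c1(q := Suc (c1 q)) = c" unfolding c1_def by (rule dec_facts(1)[where p=q and c=c, OF q(1,3)])
    have lec1: "le c1" unfolding c1_def by (rule dec_facts(2)[where p=q and c=c, OF q(1,3) less.prems(1)])
    have sc1: "(\<Sum>k\<in>{1..m}. c1 k) < (\<Sum>k\<in>{1..m}. c k)" unfolding c1_def by (rule dec_facts(3)[where p=q and c=c, OF q(1,3)])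
    have lec1': "le (c1(q := Suc (c1 q)))" unfolding c1eq by (rule less.prems(1))
    have act0: "\<exists>k\<in>{1..m}. c0 k > 0" using q by (auto simp: c0_def intro!: bexI[of _ q])
    have act1: "\<exists>k\<in>{1..m}. c1 k > 0" using p q by (auto simp: c1_def intro!: bexI[of _ p])
    have IH0: "\<And>y. y \<ge> 0 \<Longrightarrow> F c0 y = Phi m r c0 y"
      using less.hyps[OF sc0 lec0 act0] by auto
    have IH1: "\<And>y. y \<ge> 0 \<Longrightarrow> F c1 y = Phi m r c1 y"
      using less.hyps[OF sc1 lec1 act1] by auto
    define K where "K = 1 - Phi m r c 0"
    have Fp: "F c y = Phi m r c y + K * exp (- (r p * y))" if "y \<ge> 0" for y
      using step_main[OF p(1) lec' IH0 that] unfolding c0eq K_def .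
    have Fq: "F c y = Phi m r c y + K * exp (- (r q * y))" if "y \<ge> 0" for y
      using step_main[OF q(1) lec1' IH1 that] unfolding c1eq K_def .
    have "K * exp (- (r p * 1)) = K * exp (- (r q * 1))"
    proof -
      have "F c 1 = Phi m r c 1 + K * exp (- (r p * 1))" by (rule Fp) simp
      moreover have "F c 1 = Phi m r c 1 + K * exp (- (r q * 1))" by (rule Fq) simp
      ultimately show ?thesis by linarith
    qed
    moreover have "exp (- (r p * 1)) \<noteq> exp (- (r q * 1))"
      using r_ne[OF p(1) q(1) q(2)] by simp
    ultimately have "K = 0" by simp
    then show ?thesis using Fp[OF less.prems(3)] by simp
  next
    case False
    then have oth: "\<And>k. k \<in> {1..m} \<Longrightarrow> k \<noteq> p \<Longrightarrow> c k = 0" by auto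
    have cp1: "c p \<ge> 1" using p by simp
    show ?thesis
    proof (cases "c p = 1")
      case True
      have z: "\<And>k. k \<in> {1..m} \<Longrightarrow> c0 k = 0" using oth True by (auto simp: c0_def)
      have "F c x = exp (- (r p * x))"
        using step_base[OF p(1) lec' z less.prems(3)] unfolding c0eq .
      moreover have "Phi m r c x = H (r p * x) 0" using Phi_single[where p=p and m=m and c=c and r=r, OF p(1) oth cp1] True by simp
      ultimately show ?thesis by (simp add: H_0)
    next
      case False
      have act: "\<exists>k\<in>{1..m}. c0 k > 0" using p False by (auto simp: c0_def)
      have IH0: "\<And>y. y \<ge> 0 \<Longrightarrow> F c0 y = Phi m r c0 y"
        using less.hyps[OF sc0 lec0 act] by auto
      have "F c x = Phi m r c x + (1 - Phi m r c 0) * exp (- (r p * x))"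
        using step_main[OF p(1) lec' IH0 less.prems(3)] unfolding c0eq .
      moreover have "Phi m r c 0 = 1" using Phi_single[where p=p and m=m and c=c and r=r, OF p(1) oth cp1] by (simp add: H_zero)
      ultimately show ?thesis by simp
    qed
  qed
qed

end



lemma coef_fact:
  assumes "nj \<ge> 1"
  shows "coef rk rj nj gj = fact (nj - 1 + gj) / (fact (nj - 1) * fact gj) * ((- rk) ^ gj * rj ^ nj / (rj - rk) ^ (nj + gj))"
proof -
  have e: "nj + gj - 1 = nj - 1 + gj" using assms by simp
  have "real ((nj - 1 + gj) choose gj) = fact (nj - 1 + gj) / (fact gj * fact (nj - 1 + gj - gj))"
    by (rule binomial_fact) simp
  then show ?thesis unfolding coef_def e by (simp add: mult.commute)
qed

lemma rhs_eq:
  assumes n1: "\<forall>k\<in>{1..m}. n k \<ge> 1"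
  shows "Phi m r n t = (\<Sum>k\<in>{1..m}. \<Sum>gk\<in>{0..n k - 1}.
        \<Sum>g\<in>{g :: nat \<Rightarrow> nat. g k = gk \<and> (\<forall>i. i \<notin> {1..m} \<longrightarrow> g i = 0)
                 \<and> (\<Sum>i\<in>{1..m}. g i) = n k - 1}.
          (\<Prod>j\<in>{1..m} - {k}.
              fact (n j - 1 + g j) / (fact (n j - 1) * fact (g j))
              * ((- r k) ^ g j * r j ^ n j / (r j - r k) ^ (n j + g j)))
          * H (r k * t) gk)"
  unfolding Phi_def
proof (rule sum.cong[OF refl])
  fix k assume k: "k \<in> {1..m}"
  have nk: "n k \<ge> 1" using n1 k by auto
  have iv: "{0..n k - 1} = {..<n k}" using nk by auto
  show "(\<Sum>gk<n k. Cc m r n k gk * H (r k * t) gk) = (\<Sum>gk\<in>{0..n k - 1}.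
        \<Sum>g\<in>{g :: nat \<Rightarrow> nat. g k = gk \<and> (\<forall>i. i \<notin> {1..m} \<longrightarrow> g i = 0)
                 \<and> (\<Sum>i\<in>{1..m}. g i) = n k - 1}.
          (\<Prod>j\<in>{1..m} - {k}.
              fact (n j - 1 + g j) / (fact (n j - 1) * fact (g j))
              * ((- r k) ^ g j * r j ^ n j / (r j - r k) ^ (n j + g j)))
          * H (r k * t) gk)"
    unfolding iv
  proof (rule sum.cong[OF refl])
    fix gk assume gk: "gk \<in> {..<n k}"
    define A where "A = {1..m} - {k}"
    define d where "d = n k - 1 - gk"
    define T where "T = {g :: nat \<Rightarrow> nat. g k = gk \<and> (\<forall>i. i \<notin> {1..m} \<longrightarrow> g i = 0)
                 \<and> (\<Sum>i\<in>{1..m}. g i) = n k - 1}"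
    have A: "finite A" "k \<notin> A" by (auto simp: A_def)
    have sumk: "(\<Sum>i\<in>{1..m}. g i) = g k + (\<Sum>i\<in>A. g i)" for g :: "nat \<Rightarrow> nat"
      using k by (simp add: A_def sum.remove)
    have sumA: "(\<Sum>i\<in>A. (g(k := x)) i) = (\<Sum>i\<in>A. g i)" for g :: "nat \<Rightarrow> nat" and x
      using A by (intro sum.cong) auto
    have bij: "bij_betw (\<lambda>g. g(k := gk)) (tup A d) T"
    proof (rule bij_betw_byWitness[where f' = "\<lambda>g. g(k := 0)"])
      show "\<forall>a\<in>tup A d. (a(k := gk))(k := 0) = a"
        using A by (auto simp: tup_def fun_eq_iff)
      show "\<forall>a'\<in>T. (a'(k := 0))(k := gk) = a'"
        by (auto simp: T_def fun_eq_iff)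
      show "(\<lambda>g. g(k := gk)) ` tup A d \<subseteq> T"
      proof
        fix g' assume "g' \<in> (\<lambda>g. g(k := gk)) ` tup A d"
        then obtain g where g: "g \<in> tup A d" "g' = g(k := gk)" by auto
        have "(\<Sum>i\<in>{1..m}. g' i) = gk + d" using g sumk[of g'] sumA[of g gk] by (simp add: tup_def)
        also have "\<dots> = n k - 1" using gk by (simp add: d_def)
        finally show "g' \<in> T" using g k by (auto simp: T_def tup_def A_def)
      qed
      show "(\<lambda>g. g(k := 0)) ` T \<subseteq> tup A d"
      proof
        fix g' assume "g' \<in> (\<lambda>g. g(k := 0)) ` T"
        then obtain g where g: "g \<in> T" "g' = g(k := 0)" by auto
        have "(\<Sum>i\<in>A. g' i) = d" using g sumk[of g] sumA[of g 0] by (simp add: T_def d_def)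
        then show "g' \<in> tup A d" using g by (auto simp: T_def tup_def A_def)
      qed
    qed
    have "Cc m r n k gk = (\<Sum>g\<in>tup A d. \<Prod>j\<in>A. coef (r k) (r j) (n j) (g j))"
      by (simp add: Cc_def tsum_def A_def d_def)
    also have "\<dots> = (\<Sum>g\<in>tup A d. \<Prod>j\<in>A. coef (r k) (r j) (n j) ((g(k := gk)) j))"
      using A by (intro sum.cong prod.cong) auto
    also have "\<dots> = (\<Sum>g\<in>T. \<Prod>j\<in>A. coef (r k) (r j) (n j) (g j))"
      by (rule sum.reindex_bij_betw[OF bij])
    also have "\<dots> = (\<Sum>g\<in>T. \<Prod>j\<in>A. fact (n j - 1 + g j) / (fact (n j - 1) * fact (g j))
              * ((- r k) ^ g j * r j ^ n j / (r j - r k) ^ (n j + g j)))"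
      using n1 by (intro sum.cong prod.cong refl coef_fact) (auto simp: A_def)
    finally show "Cc m r n k gk * H (r k * t) gk = (\<Sum>g\<in>T. (\<Prod>j\<in>{1..m} - {k}. fact (n j - 1 + g j) / (fact (n j - 1) * fact (g j))
              * ((- r k) ^ g j * r j ^ n j / (r j - r k) ^ (n j + g j))) * H (r k * t) gk)"
      by (simp add: sum_distrib_right A_def)
  qed
qed



context comb
begin

lemma final_prob:
  assumes n1: "\<forall>k\<in>{1..m}. n k \<ge> 1" and m1: "m \<ge> 1" and tau: "0 < \<tau>" "\<tau> \<le> 1"
  shows "measure M {\<omega> \<in> space M. Qstat m n w (\<lambda>i. X i \<omega>) \<le> \<tau>} = Phi m r n (- ln \<tau>)"
proof -
  define t where "t = - ln \<tau>"
  have t: "t \<ge> 0" using tau by (simp add: t_def)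
  have IcJ: "Ic n = J" by (auto simp: Ic_def J_def)
  have len: "le n" by (simp add: le_def)
  have n11: "n 1 \<ge> 1" using n1 m1 by auto
  have act: "\<exists>k\<in>{1..m}. n k > 0" using n11 m1 by (intro bexI[of _ 1]) auto
  have FPhi: "F n t = Phi m r n t" by (rule main_ind[OF len act t])
  have Xm: "\<And>k j. k \<in> {1..m} \<Longrightarrow> j \<in> {1..n k} \<Longrightarrow> X (k, j) \<in> borel_measurable M"
    by (rule X_meas) (auto simp: J_def)
  have Qm: "(\<lambda>\<omega>. Qstat m n w (\<lambda>i. X i \<omega>)) \<in> borel_measurable M"
    unfolding Qstat_def
  proof (rule borel_measurable_prod)
    fix k assume k: "k \<in> {1..m}"
    have "(\<lambda>\<omega>. \<Prod>j\<in>{1..n k}. X (k, j) \<omega>) \<in> borel_measurable M"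
    proof (rule borel_measurable_prod)
      fix j assume "j \<in> {1..n k}"
      then show "X (k, j) \<in> borel_measurable M" by (rule Xm[OF k])
    qed
    then show "(\<lambda>\<omega>. (\<Prod>j\<in>{1..n k}. X (k, j) \<omega>) powr w k) \<in> borel_measurable M"
      by (rule powr_real_measurable) simp
  qed
  have Sm: "S n \<in> borel_measurable M" by (rule S_meas[OF len])
  have setQ: "{\<omega> \<in> space M. Qstat m n w (\<lambda>i. X i \<omega>) \<le> \<tau>} \<in> sets M"
    using Qm by measurable
  have setS: "{\<omega> \<in> space M. t \<le> S n \<omega>} \<in> sets M"
    using Sm by measurable
  have AEeq: "AE \<omega> in M. \<omega> \<in> {\<omega> \<in> space M. Qstat m n w (\<lambda>i. X i \<omega>) \<le> \<tau>} \<longleftrightarrow> \<omega> \<in> {\<omega> \<in> space M. t \<le> S n \<omega>}"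
    using AE_X
  proof (rule eventually_mono)
    fix \<omega> assume h: "\<forall>i\<in>J. X i \<omega> \<in> {0<..1}"
    have Xpos: "X (k, j) \<omega> > 0" if "k \<in> {1..m}" "j \<in> {1..n k}" for k j
      using h that by (auto simp: J_def)
    define P where "P k = (\<Prod>j\<in>{1..n k}. X (k, j) \<omega>)" for k
    have Ppos: "P k > 0" if "k \<in> {1..m}" for k
      unfolding P_def using Xpos that by (intro prod_pos) auto
    have Q: "Qstat m n w (\<lambda>i. X i \<omega>) = (\<Prod>k\<in>{1..m}. P k powr w k)"
      by (simp add: Qstat_def P_def)
    have Qpos: "Qstat m n w (\<lambda>i. X i \<omega>) > 0"
      unfolding Q
    proof (rule prod_pos)
      fix k assume "k \<in> {1..m}"
      then have "P k > 0" by (rule Ppos)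
      then show "0 < P k powr w k" by simp
    qed
    have "ln (Qstat m n w (\<lambda>i. X i \<omega>)) = (\<Sum>k\<in>{1..m}. ln (P k powr w k))"
    proof -
      have Ppow: "\<And>k. k \<in> {1..m} \<Longrightarrow> P k powr w k \<noteq> 0"
        using Ppos by (metis less_irrefl powr_eq_0_iff)
      show ?thesis unfolding Q by (rule ln_prod[OF _ Ppow]) auto
    qed
    also have "\<dots> = (\<Sum>k\<in>{1..m}. w k * (\<Sum>j\<in>{1..n k}. ln (X (k, j) \<omega>)))"
    proof (rule sum.cong[OF refl])
      fix k assume k: "k \<in> {1..m}"
      have "ln (P k) = (\<Sum>j\<in>{1..n k}. ln (X (k, j) \<omega>))"
        unfolding P_def using Xpos k by (intro ln_prod) (auto simp: less_imp_neq[symmetric])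
      then show "ln (P k powr w k) = w k * (\<Sum>j\<in>{1..n k}. ln (X (k, j) \<omega>))" by simp
    qed
    finally have lnQ: "ln (Qstat m n w (\<lambda>i. X i \<omega>)) = (\<Sum>k\<in>{1..m}. w k * (\<Sum>j\<in>{1..n k}. ln (X (k, j) \<omega>)))" .
    have JS: "J = Sigma {1..m} (\<lambda>k. {1..n k})" by (auto simp: J_def)
    have "S n \<omega> = (\<Sum>i\<in>J. w (fst i) * - ln (X i \<omega>))" by (simp add: S_def IcJ)
    also have "\<dots> = (\<Sum>k\<in>{1..m}. \<Sum>j\<in>{1..n k}. w k * - ln (X (k, j) \<omega>))"
      unfolding JS by (subst sum.Sigma) (auto intro!: sum.cong simp: split_beta)
    also have "\<dots> = - (\<Sum>k\<in>{1..m}. w k * (\<Sum>j\<in>{1..n k}. ln (X (k, j) \<omega>)))"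
      by (simp add: sum_distrib_left sum_negf)
    finally have Seq: "S n \<omega> = - ln (Qstat m n w (\<lambda>i. X i \<omega>))" using lnQ by simp
    have "Qstat m n w (\<lambda>i. X i \<omega>) \<le> \<tau> \<longleftrightarrow> ln (Qstat m n w (\<lambda>i. X i \<omega>)) \<le> ln \<tau>"
      using Qpos tau by simp
    also have "\<dots> \<longleftrightarrow> t \<le> S n \<omega>" unfolding Seq t_def by linarith
    finally show "\<omega> \<in> {\<omega> \<in> space M. Qstat m n w (\<lambda>i. X i \<omega>) \<le> \<tau>} \<longleftrightarrow> \<omega> \<in> {\<omega> \<in> space M. t \<le> S n \<omega>}"
      by auto
  qed
  have "measure M {\<omega> \<in> space M. Qstat m n w (\<lambda>i. X i \<omega>) \<le> \<tau>} = measure M {\<omega> \<in> space M. t \<le> S n \<omega>}"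
    by (rule measure_eq_AE[OF AEeq setQ setS])
  also have "\<dots> = F n t" by (simp add: F_def)
  finally show ?thesis using FPhi by (simp add: t_def)
qed

end

theorem mainTheorem1:
  fixes M :: "'a measure"
    and m :: nat and n :: "nat \<Rightarrow> nat" and w :: "nat \<Rightarrow> real"
    and X :: "nat \<times> nat \<Rightarrow> 'a \<Rightarrow> real" and \<tau> :: real
  assumes "prob_space M"
    and "m \<ge> 1"
    and "\<forall>k\<in>{1..m}. n k \<ge> 1"
    and "\<forall>k\<in>{1..m}. w k > 0"
    and "inj_on w {1..m}"
    and "prob_space.indep_vars M (\<lambda>_. borel) X {(k, j). k \<in> {1..m} \<and> j \<in> {1..n k}}"
    and "\<forall>k\<in>{1..m}. \<forall>j\<in>{1..n k}. distr M borel (X (k, j)) = uniform_measure lborel {0<..1}"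
    and "0 < \<tau>" and "\<tau> \<le> 1"
  shows "measure M {\<omega> \<in> space M. Qstat m n w (\<lambda>i. X i \<omega>) \<le> \<tau>} =
    (let r = (\<lambda>k. 1 / w k); t = - ln \<tau> in
     (\<Sum>k\<in>{1..m}. \<Sum>gk\<in>{0..n k - 1}.
        \<Sum>g\<in>{g :: nat \<Rightarrow> nat. g k = gk \<and> (\<forall>i. i \<notin> {1..m} \<longrightarrow> g i = 0)
                 \<and> (\<Sum>i\<in>{1..m}. g i) = n k - 1}.
          (\<Prod>j\<in>{1..m} - {k}.
              fact (n j - 1 + g j) / (fact (n j - 1) * fact (g j))
              * ((- r k) ^ g j * r j ^ n j / (r j - r k) ^ (n j + g j)))
          * H (r k * t) gk))"
proof -
  have c: "comb M m n w X"
    unfolding comb_def comb_axioms_def using assms(1,4,5,6,7) by blast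
  interpret comb M m n w X by (rule c)
  have req: "r = (\<lambda>k. 1 / w k)" by (simp add: fun_eq_iff r_def)
  have A: "measure M {\<omega> \<in> space M. Qstat m n w (\<lambda>i. X i \<omega>) \<le> \<tau>} = Phi m r n (- ln \<tau>)"
    by (rule final_prob[OF assms(3,2,8,9)])
  note B = rhs_eq[OF assms(3), of r "- ln \<tau>"]
  show ?thesis unfolding Let_def using trans[OF A B] unfolding req .
qed


end
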